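(* For all integers $s,t \ge 2$, the set $\Omega_{s,t}\subseteq[0,1]^2$ is compact and defines a simply connected region.
   Context: For a graph $G$, $k_t(G)$ is the number of cliques on $t$ vertices and $\overline{G}$ the complement. A pair $(x,y)\in[0,1]^2$ is realised by a sequence of graphs $(G_n)_{n\in\mathbb{N}}$ with $G_n$ of order $n$ if $\lim_{n\to\infty} k_s(\overline{G_n})/\binom{n}{s} = x$ and $\lim_{n\to\infty} k_t(G_n)/\binom{n}{t} = y$. $\Omega_{s,t}$ is the set of all pairs $(x,y)\in[0,1]^2$ realised by some sequence of graphs. *)

theory Defs
  imports "HOL-Analysis.Analysis"
begin

definition simple_graph :: "nat \<Rightarrow> (nat \<Rightarrow> nat \<Rightarrow> bool) \<Rightarrow> bool" where
  "simple_graph n E \<longleftrightarrow> (\<forall>x<n. \<forall>y<n. E x y \<longleftrightarrow> E y x) \<and> (\<forall>x<n. \<not> E x x)"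

definition graph_compl :: "(nat \<Rightarrow> nat \<Rightarrow> bool) \<Rightarrow> (nat \<Rightarrow> nat \<Rightarrow> bool)" where
  "graph_compl E = (\<lambda>x y. x \<noteq> y \<and> \<not> E x y)"

definition k_cliques :: "nat \<Rightarrow> nat \<Rightarrow> (nat \<Rightarrow> nat \<Rightarrow> bool) \<Rightarrow> nat" where
  "k_cliques t n E = card {S. S \<subseteq> {..<n} \<and> card S = t \<and> (\<forall>x\<in>S. \<forall>y\<in>S. x \<noteq> y \<longrightarrow> E x y)}"

definition Omega :: "nat \<Rightarrow> nat \<Rightarrow> (real \<times> real) set" where
  "Omega s t = {(x, y). \<exists>G :: nat \<Rightarrow> nat \<Rightarrow> nat \<Rightarrow> bool.
      (\<forall>n. simple_graph n (G n)) \<and>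
      (\<lambda>n. real (k_cliques s n (graph_compl (G n))) / real (n choose s)) \<longlonglongrightarrow> x \<and>
      (\<lambda>n. real (k_cliques t n (G n)) / real (n choose t)) \<longlonglongrightarrow> y}"

end

theory Submission
  imports Defs
begin

definition agree_off :: "nat \<Rightarrow> (nat \<Rightarrow> nat \<Rightarrow> bool) \<Rightarrow> (nat \<Rightarrow> nat \<Rightarrow> bool) \<Rightarrow> bool" where
  "agree_off i E E' \<longleftrightarrow> (\<forall>a b. a \<noteq> i \<longrightarrow> b \<noteq> i \<longrightarrow> E a b = E' a b)"

definition clq :: "nat \<Rightarrow> nat \<Rightarrow> (nat \<Rightarrow> nat \<Rightarrow> bool) \<Rightarrow> nat set set" where
  "clq t n E = {S. S \<subseteq> {..<n} \<and> card S = t \<and> (\<forall>x\<in>S. \<forall>y\<in>S. x \<noteq> y \<longrightarrow> E x y)}"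

lemma k_cliques_clq: "k_cliques t n E = card (clq t n E)"
  by (simp add: k_cliques_def clq_def)

lemma finite_clq: "finite (clq t n E)"
  by (rule finite_subset[of _ "Pow {..<n}"]) (auto simp: clq_def)

lemma card_sub_with: 
  assumes "t \<ge> 1"
  shows "card {S. S \<subseteq> {..<n} \<and> card S = t \<and> i \<in> S} \<le> (n - 1) choose (t - 1)"
proof (cases "i < n")
  case False
  then have "{S. S \<subseteq> {..<n} \<and> card S = t \<and> i \<in> S} = {}" by auto
  then show ?thesis by (metis card.empty zero_le)
next
  case True
  let ?T = "{B. B \<subseteq> {..<n} - {i} \<and> card B = t - 1}"
  have fin: "finite ?T" by (rule finite_subset[of _ "Pow {..<n}"]) auto
  have "{S. S \<subseteq> {..<n} \<and> card S = t \<and> i \<in> S} \<subseteq> insert i ` ?T"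
  proof
    fix S assume S: "S \<in> {S. S \<subseteq> {..<n} \<and> card S = t \<and> i \<in> S}"
    then have "finite S" using finite_subset by blast
    then have "S - {i} \<in> ?T" using S by auto
    moreover have "S = insert i (S - {i})" using S by auto
    ultimately show "S \<in> insert i ` ?T" by blast
  qed
  then have "card {S. S \<subseteq> {..<n} \<and> card S = t \<and> i \<in> S} \<le> card (insert i ` ?T)"
    by (intro card_mono finite_imageI fin)
  also have "\<dots> \<le> card ?T" by (rule card_image_le[OF fin])
  also have "card ?T = (n - 1) choose (t - 1)"
    using True by (subst n_subsets) auto
  finally show ?thesis .
qed

lemma agree_off_le:
  assumes "agree_off i E E'" "t \<ge> 1"
  shows "k_cliques t n E \<le> k_cliques t n E' + ((n - 1) choose (t - 1))"
proof -
  have "clq t n E \<subseteq> clq t n E' \<union> {S. S \<subseteq> {..<n} \<and> card S = t \<and> i \<in> S}"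
  proof
    fix S assume S: "S \<in> clq t n E"
    show "S \<in> clq t n E' \<union> {S. S \<subseteq> {..<n} \<and> card S = t \<and> i \<in> S}"
    proof (cases "i \<in> S")
      case True then show ?thesis using S by (simp add: clq_def)
    next
      case False
      have "\<forall>x\<in>S. \<forall>y\<in>S. x \<noteq> y \<longrightarrow> E' x y"
      proof (intro ballI impI)
        fix x y assume "x \<in> S" "y \<in> S" "x \<noteq> y"
        then have "E x y" using S by (simp add: clq_def)
        moreover have "x \<noteq> i" "y \<noteq> i" using False \<open>x \<in> S\<close> \<open>y \<in> S\<close> by auto
        ultimately show "E' x y" using assms(1) unfolding agree_off_def by simp
      qed
      then show ?thesis using S by (simp add: clq_def)
    qed
  qed
  then have "card (clq t n E) \<le> card (clq t n E' \<union> {S. S \<subseteq> {..<n} \<and> card S = t \<and> i \<in> S})"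
    by (intro card_mono finite_UnI finite_clq) (rule finite_subset[of _ "Pow {..<n}"], auto)
  also have "\<dots> \<le> card (clq t n E') + card {S. S \<subseteq> {..<n} \<and> card S = t \<and> i \<in> S}"
    by (rule card_Un_le)
  finally show ?thesis using card_sub_with[OF assms(2), of n i] by (simp add: k_cliques_clq)
qed

lemma agree_off_sym: "agree_off i E E' \<Longrightarrow> agree_off i E' E"
  by (auto simp: agree_off_def)

lemma agree_off_compl: "agree_off i E E' \<Longrightarrow> agree_off i (graph_compl E) (graph_compl E')"
  by (auto simp: agree_off_def graph_compl_def)

lemma binom_ratio:
  assumes "1 \<le> t" "t \<le> n"
  shows "real ((n - 1) choose (t - 1)) / real (n choose t) = real t / real n"
proof -
  obtain k where k: "t = Suc k" using assms by (cases t) auto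
  have "Suc k * (n choose Suc k) = n * ((n - 1) choose k)"
    by (rule binomial_absorption)
  then have "real (Suc k * (n choose Suc k)) = real (n * ((n - 1) choose k))" by (simp only:)
  then have e: "real t * real (n choose t) = real n * real ((n - 1) choose (t - 1))"
    unfolding k of_nat_mult by simp
  have p1: "real (n choose t) > 0" using assms by simp
  have p2: "real n > 0" using assms by simp
  show ?thesis using e p1 p2 by (simp add: field_simps)
qed

lemma agree_off_dens:
  assumes "agree_off i E E'" "1 \<le> t" "t \<le> n"
  shows "\<bar>real (k_cliques t n E) / real (n choose t) - real (k_cliques t n E') / real (n choose t)\<bar> \<le> real t / real n"
proof -
  have a: "real (k_cliques t n E) \<le> real (k_cliques t n E') + real ((n - 1) choose (t - 1))"
    using agree_off_le[OF assms(1,2), of n] by (simp only: of_nat_add[symmetric] of_nat_le_iff)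
  have b: "real (k_cliques t n E') \<le> real (k_cliques t n E) + real ((n - 1) choose (t - 1))"
    using agree_off_le[OF agree_off_sym[OF assms(1)] assms(2), of n] by (simp only: of_nat_add[symmetric] of_nat_le_iff)
  have pos: "real (n choose t) > 0" using assms by simp
  have "\<bar>real (k_cliques t n E) - real (k_cliques t n E')\<bar> \<le> real ((n - 1) choose (t - 1))"
    using a b by linarith
  then have "\<bar>real (k_cliques t n E) - real (k_cliques t n E')\<bar> / real (n choose t) \<le> real ((n - 1) choose (t - 1)) / real (n choose t)"
    using pos by (intro divide_right_mono) auto
  also have "\<dots> = real t / real n" by (rule binom_ratio[OF assms(2,3)])
  also have "\<bar>real (k_cliques t n E) - real (k_cliques t n E')\<bar> / real (n choose t) =
     \<bar>real (k_cliques t n E) / real (n choose t) - real (k_cliques t n E') / real (n choose t)\<bar>"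
    using pos by (simp add: diff_divide_distrib abs_div_pos)
  finally show ?thesis by (simp only: )
qed

definition gsub :: "nat \<Rightarrow> (nat \<Rightarrow> nat \<Rightarrow> bool) \<Rightarrow> (nat \<Rightarrow> nat \<Rightarrow> bool) \<Rightarrow> bool" where
  "gsub n E E' \<longleftrightarrow> (\<forall>a<n. \<forall>b<n. E a b \<longrightarrow> E' a b)"

lemma gsub_mono: "gsub n E E' \<Longrightarrow> k_cliques t n E \<le> k_cliques t n E'"
  unfolding k_cliques_clq
  by (intro card_mono finite_clq) (auto simp: clq_def gsub_def subset_iff)

lemma gsub_mono_compl: "gsub n E E' \<Longrightarrow> k_cliques t n (graph_compl E') \<le> k_cliques t n (graph_compl E)"
  unfolding k_cliques_clq
  apply (intro card_mono finite_clq)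
  apply (clarsimp simp: clq_def gsub_def graph_compl_def)
  by (meson lessThan_iff subsetD)

lemma kc_complete:
  assumes "\<forall>a<n. \<forall>b<n. a \<noteq> b \<longrightarrow> E a b"
  shows "k_cliques t n E = n choose t"
proof -
  have "clq t n E = {S. S \<subseteq> {..<n} \<and> card S = t}" using assms by (auto simp: clq_def)
  then show ?thesis by (simp add: k_cliques_clq n_subsets)
qed

lemma kc_empty:
  assumes "\<forall>a<n. \<forall>b<n. \<not> E a b" "t \<ge> 2"
  shows "k_cliques t n E = 0"
proof -
  have "clq t n E = {}"
  proof (rule ccontr)
    assume "clq t n E \<noteq> {}"
    then obtain S where S: "S \<subseteq> {..<n}" "card S = t" "\<forall>x\<in>S. \<forall>y\<in>S. x \<noteq> y \<longrightarrow> E x y"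
      by (auto simp: clq_def)
    have "2 \<le> card S" using S assms by simp
    have "S \<noteq> {}"
    proof
      assume "S = {}"
      then show False using \<open>2 \<le> card S\<close> by simp
    qed
    then obtain x where x: "x \<in> S" by blast
    have "\<exists>y\<in>S. y \<noteq> x"
    proof (rule ccontr)
      assume "\<not> (\<exists>y\<in>S. y \<noteq> x)"
      then have "S = {x}" using x by blast
      then show False using \<open>2 \<le> card S\<close> by simp
    qed
    then obtain y where y: "y \<in> S" "y \<noteq> x" by blast
    have "E x y" using S(3) x y(1) y(2)[symmetric] by simp
    moreover have xn: "x < n" using S(1) x by auto
    moreover have yn: "y < n" using S(1) y(1) by auto
    ultimately show False using assms(1) by simp
  qed
  then show ?thesis by (simp add: k_cliques_clq)
qed


definition Ad :: "nat \<Rightarrow> (nat \<Rightarrow> nat \<Rightarrow> bool) \<Rightarrow> (nat \<Rightarrow> nat \<Rightarrow> bool)" where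
  "Ad m F = (\<lambda>a b. F a b \<or> (a \<noteq> b \<and> (a < m \<or> b < m)))"
definition Rd :: "nat \<Rightarrow> (nat \<Rightarrow> nat \<Rightarrow> bool) \<Rightarrow> (nat \<Rightarrow> nat \<Rightarrow> bool)" where
  "Rd m F = (\<lambda>a b. F a b \<and> m \<le> a \<and> m \<le> b)"
definition Gam :: "nat \<Rightarrow> (nat \<Rightarrow> nat \<Rightarrow> bool) \<Rightarrow> nat \<Rightarrow> (nat \<Rightarrow> nat \<Rightarrow> bool)" where
  "Gam n F j = (if j \<le> n then Ad (n - j) F else Rd (j - n) F)"
definition Mix :: "nat \<Rightarrow> (nat \<Rightarrow> nat \<Rightarrow> bool) \<Rightarrow> (nat \<Rightarrow> nat \<Rightarrow> bool) \<Rightarrow> (nat \<Rightarrow> nat \<Rightarrow> bool)" where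
  "Mix i G H = (\<lambda>a b. if a < i \<or> b < i then H a b else G a b)"

definition agree_on :: "nat \<Rightarrow> (nat \<Rightarrow> nat \<Rightarrow> bool) \<Rightarrow> (nat \<Rightarrow> nat \<Rightarrow> bool) \<Rightarrow> bool" where
  "agree_on n E E' \<longleftrightarrow> (\<forall>a<n. \<forall>b<n. E a b = E' a b)"

lemma agree_on_kc: "agree_on n E E' \<Longrightarrow> k_cliques t n E = k_cliques t n E'"
proof -
  assume a: "agree_on n E E'"
  have "clq t n E = clq t n E'"
    unfolding clq_def using a unfolding agree_on_def by (auto simp: subset_iff) 
  then show ?thesis by (simp add: k_cliques_clq)
qed

lemma agree_on_compl: "agree_on n E E' \<Longrightarrow> agree_on n (graph_compl E) (graph_compl E')"
  by (simp add: agree_on_def graph_compl_def)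

lemma agree_on_Gam: "agree_on n F F' \<Longrightarrow> agree_on n (Gam n F j) (Gam n F' j)"
  by (simp add: agree_on_def Gam_def Ad_def Rd_def)

lemma agree_off_Gam: "agree_off i F F' \<Longrightarrow> agree_off i (Gam n F j) (Gam n F' j)"
  by (simp add: agree_off_def Gam_def Ad_def Rd_def)

lemma simple_Gam: "simple_graph n F \<Longrightarrow> simple_graph n (Gam n F j)"
  by (auto simp add: simple_graph_def Gam_def Ad_def Rd_def)

lemma simple_Mix: "simple_graph n G \<Longrightarrow> simple_graph n H \<Longrightarrow> simple_graph n (Mix i G H)"
  by (auto simp add: simple_graph_def Mix_def)

lemma Mix_step: "agree_off i (Mix i G H) (Mix (Suc i) G H)"
  by (auto simp add: agree_off_def Mix_def)

lemma Mix_0: "Mix 0 G H = G" by (simp add: Mix_def)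
lemma Mix_n: "agree_on n (Mix n G H) H" by (simp add: Mix_def agree_on_def)

lemma Gam_n: "Gam n F n = F" by (simp add: Gam_def Ad_def)

lemma Gam_step: "\<exists>i. agree_off i (Gam n F j) (Gam n F (Suc j))"
proof (cases "j < n")
  case True
  then have "agree_off (n - Suc j) (Gam n F j) (Gam n F (Suc j))"
    by (auto simp add: agree_off_def Gam_def Ad_def)
  then show ?thesis by blast
next
  case False
  then have "agree_off (j - n) (Gam n F j) (Gam n F (Suc j))"
    by (auto simp add: agree_off_def Gam_def Ad_def Rd_def)
  then show ?thesis by blast
qed

lemma Gam_sub: "j \<le> j' \<Longrightarrow> gsub n (Gam n F j') (Gam n F j)"
  by (auto simp add: gsub_def Gam_def Ad_def Rd_def)

lemma Gam_0_complete: "\<forall>a<n. \<forall>b<n. a \<noteq> b \<longrightarrow> Gam n F 0 a b"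
  by (auto simp add: Gam_def Ad_def)
lemma Gam_0_compl_empty: "\<forall>a<n. \<forall>b<n. \<not> graph_compl (Gam n F 0) a b"
  by (auto simp add: Gam_def Ad_def graph_compl_def)
lemma Gam_2n_empty: "\<forall>a<n. \<forall>b<n. \<not> Gam n F (2*n) a b"
  by (simp add: Gam_def Rd_def)
lemma Gam_2n_compl_complete: "\<forall>a<n. \<forall>b<n. a \<noteq> b \<longrightarrow> graph_compl (Gam n F (2*n)) a b"
  by (simp add: Gam_def Rd_def graph_compl_def)

lemma discrete_ivt_up:
  fixes f :: "nat \<Rightarrow> real"
  assumes "\<And>i. i < N \<Longrightarrow> \<bar>f (Suc i) - f i\<bar> \<le> e" "f 0 \<le> w" "w \<le> f N" "e \<ge> 0"
  shows "\<exists>i\<le>N. \<bar>f i - w\<bar> \<le> e"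
proof -
  define k where "k = (LEAST i. w \<le> f i)"
  have wk: "w \<le> f k" unfolding k_def by (rule LeastI[of _ N]) (rule assms(3))
  have kN: "k \<le> N" unfolding k_def by (rule Least_le) (rule assms(3))
  show ?thesis
  proof (cases k)
    case 0
    then show ?thesis using wk assms(2,4) kN by (intro exI[of _ 0]) auto
  next
    case (Suc m)
    have "\<not> w \<le> f m" using not_less_Least[of m "\<lambda>i. w \<le> f i"] Suc unfolding k_def by simp
    moreover have "\<bar>f (Suc m) - f m\<bar> \<le> e" using assms(1)[of m] Suc kN by simp
    ultimately show ?thesis using wk Suc kN by (intro exI[of _ k]) auto
  qed
qed

lemma discrete_ivt:
  fixes f :: "nat \<Rightarrow> real"
  assumes "\<And>i. i < N \<Longrightarrow> \<bar>f (Suc i) - f i\<bar> \<le> e" "min (f 0) (f N) \<le> w" "w \<le> max (f 0) (f N)" "e \<ge> 0"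
  shows "\<exists>i\<le>N. \<bar>f i - w\<bar> \<le> e"
proof (cases "f 0 \<le> f N")
  case True
  then show ?thesis using discrete_ivt_up[of N f e w] assms by auto
next
  case False
  have "\<exists>i\<le>N. \<bar>(\<lambda>i. - f i) i - (- w)\<bar> \<le> e"
    using False assms by (intro discrete_ivt_up) (auto simp: abs_minus_commute)
  then show ?thesis by (auto simp: abs_minus_commute)
qed


locale ST =
  fixes s t :: nat
  assumes s2: "2 \<le> s" and t2: "2 \<le> t"
begin

definition X where "X n E = real (k_cliques s n (graph_compl E)) / real (n choose s)"
definition Y where "Y n E = real (k_cliques t n E) / real (n choose t)"
definition V where "V n E = X n E - Y n E"
definition U where "U n E = X n E + Y n E"
definition dl :: "nat \<Rightarrow> real" where "dl n = real (s + t) / real n"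

lemma dl_nonneg: "dl n \<ge> 0" by (simp add: dl_def)

lemma agree_on_XY: "agree_on n E E' \<Longrightarrow> X n E = X n E' \<and> Y n E = Y n E'"
  by (simp add: X_def Y_def agree_on_kc agree_on_compl)

lemma agree_on_UV: "agree_on n E E' \<Longrightarrow> U n E = U n E' \<and> V n E = V n E'"
  using agree_on_XY by (simp add: U_def V_def)

lemma step_XY:
  assumes "agree_off i E E'" "s + t \<le> n"
  shows "\<bar>X n E - X n E'\<bar> \<le> real s / real n" "\<bar>Y n E - Y n E'\<bar> \<le> real t / real n"
proof -
  show "\<bar>X n E - X n E'\<bar> \<le> real s / real n"
    unfolding X_def using agree_off_dens[OF agree_off_compl[OF assms(1)], of s n] s2 assms(2) by simp
  show "\<bar>Y n E - Y n E'\<bar> \<le> real t / real n"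
    unfolding Y_def using agree_off_dens[OF assms(1), of t n] t2 assms(2) by simp
qed

lemma dl_split: "dl n = real s / real n + real t / real n"
  by (simp add: dl_def add_divide_distrib)

lemma step_UV:
  assumes "agree_off i E E'" "s + t \<le> n"
  shows "\<bar>V n E - V n E'\<bar> \<le> dl n" "\<bar>U n E - U n E'\<bar> \<le> dl n"
  using step_XY[OF assms] unfolding V_def U_def dl_split by linarith+

lemma mono_XY:
  assumes "gsub n E E'"
  shows "X n E' \<le> X n E" "Y n E \<le> Y n E'"
proof -
  show "X n E' \<le> X n E" unfolding X_def
    using gsub_mono_compl[OF assms, of s] by (intro divide_right_mono) auto
  show "Y n E \<le> Y n E'" unfolding Y_def
    using gsub_mono[OF assms, of t] by (intro divide_right_mono) auto
qed

lemma mono_UV: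
  assumes "gsub n E E'"
  shows "\<bar>U n E' - U n E\<bar> \<le> V n E - V n E'"
  using mono_XY[OF assms] unfolding U_def V_def by linarith

lemma V_Gam0:
  assumes "s + t \<le> n"
  shows "V n (Gam n F 0) = -1"
proof -
  have "X n (Gam n F 0) = 0" unfolding X_def using kc_empty[OF Gam_0_compl_empty s2] by simp
  moreover have "Y n (Gam n F 0) = 1" unfolding Y_def using kc_complete[OF Gam_0_complete] assms
    by simp
  ultimately show ?thesis by (simp add: V_def)
qed

lemma V_Gam2n:
  assumes "s + t \<le> n"
  shows "V n (Gam n F (2*n)) = 1"
proof -
  have "Y n (Gam n F (2*n)) = 0" unfolding Y_def using kc_empty[OF Gam_2n_empty t2] by simp
  moreover have "X n (Gam n F (2*n)) = 1" unfolding X_def using kc_complete[OF Gam_2n_compl_complete] assms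
    by simp
  ultimately show ?thesis by (simp add: V_def)
qed

definition cj where "cj n c F = (LEAST j. c \<le> V n (Gam n F j))"
definition cr where "cr n c F = Gam n F (cj n c F)"

lemma simple_cr: "simple_graph n F \<Longrightarrow> simple_graph n (cr n c F)"
  by (simp add: cr_def simple_Gam)

lemma cj_props:
  assumes "c \<le> 1" "s + t \<le> n"
  shows "cj n c F \<le> 2 * n" "c \<le> V n (cr n c F)"
proof -
  have ex: "c \<le> V n (Gam n F (2*n))" using V_Gam2n[OF assms(2)] assms(1) by simp
  show "cj n c F \<le> 2 * n" unfolding cj_def by (rule Least_le) (rule ex)
  show "c \<le> V n (cr n c F)" unfolding cr_def cj_def by (rule LeastI) (rule ex)
qed

lemma cj_before:
  assumes "j < cj n c F"
  shows "V n (Gam n F j) < c"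
  using not_less_Least[of j "\<lambda>j. c \<le> V n (Gam n F j)"] assms unfolding cj_def by simp

lemma cr_upper:
  assumes "-1 \<le> c" "c \<le> 1" "s + t \<le> n"
  shows "V n (cr n c F) \<le> c + dl n"
proof (cases "cj n c F")
  case 0
  then show ?thesis using V_Gam0[OF assms(3), of F] assms dl_nonneg[of n] by (simp add: cr_def)
next
  case (Suc k)
  have "V n (Gam n F k) < c" using cj_before[of k n c F] Suc by simp
  moreover obtain i where "agree_off i (Gam n F k) (Gam n F (Suc k))" using Gam_step by blast
  then have "\<bar>V n (Gam n F k) - V n (Gam n F (Suc k))\<bar> \<le> dl n" using step_UV assms(3) by blast
  ultimately show ?thesis using Suc by (simp add: cr_def)
qed

lemma cr_lip:
  assumes "-1 \<le> c" "c \<le> 1" "s + t \<le> n"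
  shows "\<bar>U n (cr n c F) - U n F\<bar> \<le> \<bar>c - V n F\<bar> + dl n"
proof (cases "cj n c F \<le> n")
  case True
  have "gsub n (Gam n F n) (Gam n F (cj n c F))" using True by (rule Gam_sub)
  then have "\<bar>U n (Gam n F (cj n c F)) - U n (Gam n F n)\<bar> \<le> V n (Gam n F n) - V n (Gam n F (cj n c F))"
    by (rule mono_UV)
  moreover have "c \<le> V n (Gam n F (cj n c F))" using cj_props[OF assms(2,3)] by (simp add: cr_def)
  ultimately show ?thesis using dl_nonneg[of n] by (simp add: cr_def Gam_n)
next
  case False
  have "gsub n (Gam n F (cj n c F)) (Gam n F n)" using False by (intro Gam_sub) simp
  then have "\<bar>U n (Gam n F n) - U n (Gam n F (cj n c F))\<bar> \<le> V n (Gam n F (cj n c F)) - V n (Gam n F n)"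
    by (rule mono_UV)
  moreover have "V n (Gam n F (cj n c F)) \<le> c + dl n" using cr_upper[OF assms] by (simp add: cr_def)
  moreover have "V n (Gam n F n) < c" using cj_before[of n n c F] False by simp
  ultimately show ?thesis by (simp add: cr_def Gam_n abs_minus_commute)
qed

lemma cr_agree_on:
  assumes "agree_on n F F'"
  shows "U n (cr n c F) = U n (cr n c F')" "V n (cr n c F) = V n (cr n c F')"
proof -
  have "\<And>j. V n (Gam n F j) = V n (Gam n F' j)"
    using agree_on_UV[OF agree_on_Gam[OF assms]] by blast
  then have "cj n c F = cj n c F'" by (simp add: cj_def)
  then show "U n (cr n c F) = U n (cr n c F')" "V n (cr n c F) = V n (cr n c F')"
    using agree_on_UV[OF agree_on_Gam[OF assms]] by (simp_all add: cr_def)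
qed

lemma cr_agree_off_aux:
  assumes "agree_off i F F'" "-1 \<le> c" "c \<le> 1" "s + t \<le> n" "cj n c F \<le> cj n c F'"
  shows "\<bar>U n (cr n c F) - U n (cr n c F')\<bar> \<le> 3 * dl n"
proof -
  let ?j = "cj n c F" and ?j' = "cj n c F'"
  have a: "\<bar>U n (Gam n F ?j) - U n (Gam n F' ?j)\<bar> \<le> dl n"
    "\<bar>V n (Gam n F ?j) - V n (Gam n F' ?j)\<bar> \<le> dl n"
    using step_UV[OF agree_off_Gam[OF assms(1)] assms(4)] by auto
  have "gsub n (Gam n F' ?j') (Gam n F' ?j)" using assms(5) by (rule Gam_sub)
  then have b: "\<bar>U n (Gam n F' ?j) - U n (Gam n F' ?j')\<bar> \<le> V n (Gam n F' ?j') - V n (Gam n F' ?j)"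
    by (rule mono_UV)
  have c1: "V n (Gam n F' ?j') \<le> c + dl n" using cr_upper[OF assms(2-4)] by (simp add: cr_def)
  have c2: "c \<le> V n (Gam n F ?j)" using cj_props[OF assms(3,4)] by (simp add: cr_def)
  show ?thesis using a b c1 c2 unfolding cr_def by linarith
qed

lemma cr_agree_off:
  assumes "agree_off i F F'" "-1 \<le> c" "c \<le> 1" "s + t \<le> n"
  shows "\<bar>U n (cr n c F) - U n (cr n c F')\<bar> \<le> 3 * dl n"
proof (cases "cj n c F \<le> cj n c F'")
  case True
  then show ?thesis using cr_agree_off_aux[OF assms] by simp
next
  case False
  then show ?thesis using cr_agree_off_aux[OF agree_off_sym[OF assms(1)] assms(2-4)]
    by (simp add: abs_minus_commute)
qed

lemma key_finite:
  assumes "s + t \<le> n" "-1 \<le> c" "c \<le> 1" "simple_graph n G" "simple_graph n H"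
    "min (U n (cr n c G)) (U n (cr n c H)) \<le> w" "w \<le> max (U n (cr n c G)) (U n (cr n c H))"
  shows "\<exists>F. simple_graph n F \<and> \<bar>U n F - w\<bar> \<le> 3 * dl n \<and> c \<le> V n F \<and> V n F \<le> c + dl n"
proof -
  define f where "f i = U n (cr n c (Mix i G H))" for i
  have f0: "f 0 = U n (cr n c G)" by (simp add: f_def Mix_0)
  have fn: "f n = U n (cr n c H)" unfolding f_def by (rule cr_agree_on(1)[OF Mix_n])
  have "\<exists>i\<le>n. \<bar>f i - w\<bar> \<le> 3 * dl n"
  proof (rule discrete_ivt)
    fix i assume "i < n"
    show "\<bar>f (Suc i) - f i\<bar> \<le> 3 * dl n"
      unfolding f_def using cr_agree_off[OF Mix_step assms(2,3,1), of i G H]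
      by (simp add: abs_minus_commute)
  qed (use f0 fn assms dl_nonneg in auto)
  then obtain i where i: "\<bar>f i - w\<bar> \<le> 3 * dl n" by blast
  let ?F = "cr n c (Mix i G H)"
  have "simple_graph n ?F" using assms(4,5) by (intro simple_cr simple_Mix)
  moreover have "c \<le> V n ?F" using cj_props[OF assms(3,1)] by simp
  moreover have "V n ?F \<le> c + dl n" using cr_upper[OF assms(2,3,1)] by simp
  ultimately show ?thesis using i unfolding f_def by blast
qed

end

lemma dist_pair_le: "dist (a::real, b::real) (c, d) \<le> \<bar>a - c\<bar> + \<bar>b - d\<bar>"
  unfolding dist_Pair_Pair dist_real_def using sqrt_sum_squares_le_sum_abs by simp

lemma fst_diff_le: "\<bar>fst p - fst q\<bar> \<le> dist p (q :: real \<times> real)"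
  using dist_fst_le[of p q] by (simp add: dist_real_def)
lemma snd_diff_le: "\<bar>snd p - snd q\<bar> \<le> dist p (q :: real \<times> real)"
  using dist_snd_le[of p q] by (simp add: dist_real_def)

lemma aux4: "\<bar>a + b - w\<bar> \<le> 3*d \<Longrightarrow> c \<le> a - b \<Longrightarrow> a - b \<le> c + d \<Longrightarrow> \<bar>a - (w+c)/2\<bar> + \<bar>b - (w-c)/2\<bar> \<le> 4*(d::real)"
  by (simp add: abs_if field_simps split: if_splits)

definition pu :: "real \<times> real \<Rightarrow> real" where "pu p = fst p + snd p"
definition pv :: "real \<times> real \<Rightarrow> real" where "pv p = fst p - snd p"

lemma pu_diff: "\<bar>pu p - pu q\<bar> \<le> 2 * dist p q"
  using fst_diff_le[of p q] snd_diff_le[of p q] unfolding pu_def by linarith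
lemma pv_diff: "\<bar>pv p - pv q\<bar> \<le> 2 * dist p q"
  using fst_diff_le[of p q] snd_diff_le[of p q] unfolding pv_def by linarith

lemma card_clq_le: "card (clq t n E) \<le> n choose t"
proof -
  have "card (clq t n E) \<le> card {S. S \<subseteq> {..<n} \<and> card S = t}"
    by (rule card_mono) (auto simp: clq_def)
  then show ?thesis by (simp add: n_subsets)
qed

lemma dens_01: "0 \<le> real (k_cliques t n E) / real (n choose t)" "real (k_cliques t n E) / real (n choose t) \<le> 1"
proof -
  show "0 \<le> real (k_cliques t n E) / real (n choose t)" by simp
  have "real (k_cliques t n E) \<le> real (n choose t)" using card_clq_le by (simp add: k_cliques_clq)
  then show "real (k_cliques t n E) / real (n choose t) \<le> 1"
    by (cases "real (n choose t) = 0") (auto simp: divide_le_eq_1)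
qed

context ST
begin

definition pt where "pt n E = (X n E, Y n E)"

lemma pu_pt: "pu (pt n E) = U n E" by (simp add: pu_def pt_def U_def)
lemma pv_pt: "pv (pt n E) = V n E" by (simp add: pv_def pt_def V_def)

lemma dl_eventually: "r > 0 \<Longrightarrow> eventually (\<lambda>n. dl n < r) sequentially"
proof -
  assume "r > 0"
  have "(\<lambda>n. real (s + t) / real n) \<longlonglongrightarrow> 0" by (rule lim_const_over_n)
  then show ?thesis using \<open>r > 0\<close> unfolding dl_def by (rule order_tendstoD(2))
qed

lemma Omega_iff:
  "p \<in> Omega s t \<longleftrightarrow> (\<forall>e>0. eventually (\<lambda>n. \<exists>E. simple_graph n E \<and> dist (pt n E) p < e) sequentially)"
proof
  assume "p \<in> Omega s t"
  then obtain G where G: "\<forall>n. simple_graph n (G n)" "(\<lambda>n. X n (G n)) \<longlonglongrightarrow> fst p" "(\<lambda>n. Y n (G n)) \<longlonglongrightarrow> snd p"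
    unfolding Omega_def X_def Y_def by (cases p) auto
  have "(\<lambda>n. pt n (G n)) \<longlonglongrightarrow> p" unfolding pt_def using tendsto_Pair[OF G(2,3)] by simp
  then have T: "\<forall>e>0. eventually (\<lambda>n. dist (pt n (G n)) p < e) sequentially"
    unfolding tendsto_iff .
  show "\<forall>e>0. eventually (\<lambda>n. \<exists>E. simple_graph n E \<and> dist (pt n E) p < e) sequentially"
  proof (intro allI impI)
    fix e :: real assume "e > 0"
    then have "eventually (\<lambda>n. dist (pt n (G n)) p < e) sequentially" using T by blast
    then show "eventually (\<lambda>n. \<exists>E. simple_graph n E \<and> dist (pt n E) p < e) sequentially"
      by (rule eventually_mono) (use G(1) in blast)
  qed
next
  assume A: "\<forall>e>0. eventually (\<lambda>n. \<exists>E. simple_graph n E \<and> dist (pt n E) p < e) sequentially"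
  define S where "S n = (\<lambda>E. dist (pt n E) p) ` {E. simple_graph n E}" for n
  define dd where "dd n = Inf (S n)" for n
  have ne: "S n \<noteq> {}" for n
  proof -
    have "simple_graph n (\<lambda>_ _. False)" by (simp add: simple_graph_def)
    then show ?thesis by (auto simp: S_def)
  qed
  have bb: "bdd_below (S n)" for n unfolding S_def by (rule bdd_belowI[of _ 0]) auto
  have ex: "\<exists>E. simple_graph n E \<and> dist (pt n E) p < dd n + 1 / (real n + 1)" for n
  proof -
    have "Inf (S n) < dd n + 1 / (real n + 1)" by (simp add: dd_def)
    then obtain x where "x \<in> S n" "x < dd n + 1 / (real n + 1)" using cInf_less_iff[OF ne bb] by blast
    then show ?thesis by (auto simp: S_def)
  qed
  define G where "G n = (SOME E. simple_graph n E \<and> dist (pt n E) p < dd n + 1 / (real n + 1))" for n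
  have G: "simple_graph n (G n) \<and> dist (pt n (G n)) p < dd n + 1 / (real n + 1)" for n
    using someI_ex[OF ex[of n]] unfolding G_def by simp
  have lim: "(\<lambda>n. pt n (G n)) \<longlonglongrightarrow> p"
    unfolding tendsto_iff
  proof (intro allI impI)
    fix e :: real assume e: "e > 0"
    have e2: "e / 2 > 0" using e by simp
    have ev1: "eventually (\<lambda>n. \<exists>E. simple_graph n E \<and> dist (pt n E) p < e / 2) sequentially"
      using A e2 by blast
    have "(\<lambda>n. 1 / (real n + 1)) \<longlonglongrightarrow> 0" using LIMSEQ_inverse_real_of_nat by (simp add: inverse_eq_divide add.commute)
    then have ev2: "eventually (\<lambda>n. 1 / (real n + 1) < e / 2) sequentially"
      using e by (intro order_tendstoD(2)) auto
    show "eventually (\<lambda>n. dist (pt n (G n)) p < e) sequentially"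
      using ev1 ev2
    proof eventually_elim
      case (elim n)
      then obtain E where E: "simple_graph n E" "dist (pt n E) p < e / 2" by blast
      have "dd n \<le> dist (pt n E) p" unfolding dd_def using E(1) bb by (intro cInf_lower) (auto simp: S_def)
      then show ?case using G[of n] E elim by linarith
    qed
  qed
  have "(\<lambda>n. X n (G n)) \<longlonglongrightarrow> fst p" using tendsto_fst[OF lim] by (simp add: pt_def)
  moreover have "(\<lambda>n. Y n (G n)) \<longlonglongrightarrow> snd p" using tendsto_snd[OF lim] by (simp add: pt_def)
  ultimately show "p \<in> Omega s t"
    unfolding Omega_def X_def Y_def using G by (cases p) auto
qed

lemma Omega_box: "Omega s t \<subseteq> cbox (0,0) (1,1)"
proof
  fix p assume "p \<in> Omega s t"
  then obtain G where G: "(\<lambda>n. X n (G n)) \<longlonglongrightarrow> fst p" "(\<lambda>n. Y n (G n)) \<longlonglongrightarrow> snd p"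
    unfolding Omega_def X_def Y_def by (cases p) auto
  have "0 \<le> fst p" by (rule LIMSEQ_le_const[OF G(1)]) (auto simp: X_def dens_01)
  moreover have "fst p \<le> 1" by (rule LIMSEQ_le_const2[OF G(1)]) (auto simp: X_def dens_01)
  moreover have "0 \<le> snd p" by (rule LIMSEQ_le_const[OF G(2)]) (auto simp: Y_def dens_01)
  moreover have "snd p \<le> 1" by (rule LIMSEQ_le_const2[OF G(2)]) (auto simp: Y_def dens_01)
  ultimately show "p \<in> cbox (0,0) (1,1)" by (cases p) (simp add: cbox_Pair_iff)
qed

lemma Omega_closed: "closed (Omega s t)"
  unfolding closed_limpt
proof (intro allI impI)
  fix p assume "p islimpt Omega s t"
  then have L: "\<forall>e>0. \<exists>q\<in>Omega s t. dist q p < e" unfolding islimpt_approachable by blast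
  show "p \<in> Omega s t" unfolding Omega_iff
  proof (intro allI impI)
    fix e :: real assume e: "e > 0"
    obtain q where q: "q \<in> Omega s t" "dist q p < e / 2" using L e by (meson half_gt_zero)
    have e2: "e / 2 > 0" using e by simp
    have "\<forall>e>0. eventually (\<lambda>n. \<exists>E. simple_graph n E \<and> dist (pt n E) q < e) sequentially"
      using q(1) unfolding Omega_iff .
    then have "eventually (\<lambda>n. \<exists>E. simple_graph n E \<and> dist (pt n E) q < e / 2) sequentially"
      using e2 by blast
    then show "eventually (\<lambda>n. \<exists>E. simple_graph n E \<and> dist (pt n E) p < e) sequentially"
    proof (rule eventually_mono)
      fix n assume "\<exists>E. simple_graph n E \<and> dist (pt n E) q < e / 2"
      then obtain E where "simple_graph n E" "dist (pt n E) q < e / 2" by blast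
      moreover have "dist (pt n E) p \<le> dist (pt n E) q + dist q p" by (rule dist_triangle)
      ultimately show "\<exists>E. simple_graph n E \<and> dist (pt n E) p < e" using q(2) by force
    qed
  qed
qed

lemma Omega_compact: "compact (Omega s t)"
  unfolding compact_eq_bounded_closed
  using Omega_closed Omega_box bounded_cbox bounded_subset by blast

lemma key_limit:
  assumes p1: "p1 \<in> Omega s t" and p2: "p2 \<in> Omega s t" and c: "-1 \<le> c" "c \<le> 1"
    and w1: "pu p1 + \<bar>c - pv p1\<bar> < w" and w2: "w < pu p2 - \<bar>c - pv p2\<bar>"
  shows "((w + c) / 2, (w - c) / 2) \<in> Omega s t"
  unfolding Omega_iff
proof (intro allI impI)
  fix e :: real assume e: "e > 0"
  define eta where "eta = min (w - (pu p1 + \<bar>c - pv p1\<bar>)) ((pu p2 - \<bar>c - pv p2\<bar>) - w)"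
  have eta: "eta > 0" using w1 w2 by (simp add: eta_def)
  have eta8: "eta / 8 > 0" using eta by simp
  have P1: "\<forall>e>0. eventually (\<lambda>n. \<exists>E. simple_graph n E \<and> dist (pt n E) p1 < e) sequentially"
    using p1 unfolding Omega_iff .
  have P2: "\<forall>e>0. eventually (\<lambda>n. \<exists>E. simple_graph n E \<and> dist (pt n E) p2 < e) sequentially"
    using p2 unfolding Omega_iff .
  have ev1: "eventually (\<lambda>n. \<exists>E. simple_graph n E \<and> dist (pt n E) p1 < eta / 8) sequentially"
    using P1 eta8 by blast
  have ev2: "eventually (\<lambda>n. \<exists>E. simple_graph n E \<and> dist (pt n E) p2 < eta / 8) sequentially"
    using P2 eta8 by blast
  have ev3: "eventually (\<lambda>n. dl n < min (eta / 2) (e / 4)) sequentially"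
    using eta e by (intro dl_eventually) simp
  have ev4: "eventually (\<lambda>n. s + t \<le> n) sequentially" by (rule eventually_ge_at_top)
  show "eventually (\<lambda>n. \<exists>E. simple_graph n E \<and> dist (pt n E) ((w + c) / 2, (w - c) / 2) < e) sequentially"
    using ev1 ev2 ev3 ev4
  proof eventually_elim
    case (elim n)
    then obtain G H where G: "simple_graph n G" "dist (pt n G) p1 < eta / 8"
      and H: "simple_graph n H" "dist (pt n H) p2 < eta / 8" by blast
    have uG: "\<bar>U n G - pu p1\<bar> \<le> eta / 4" "\<bar>V n G - pv p1\<bar> \<le> eta / 4"
      using pu_diff[of "pt n G" p1] pv_diff[of "pt n G" p1] G(2) by (simp_all add: pu_pt pv_pt)
    have uH: "\<bar>U n H - pu p2\<bar> \<le> eta / 4" "\<bar>V n H - pv p2\<bar> \<le> eta / 4"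
      using pu_diff[of "pt n H" p2] pv_diff[of "pt n H" p2] H(2) by (simp_all add: pu_pt pv_pt)
    have cG: "\<bar>U n (cr n c G) - U n G\<bar> \<le> \<bar>c - V n G\<bar> + dl n" by (rule cr_lip[OF c elim(4)])
    have cH: "\<bar>U n (cr n c H) - U n H\<bar> \<le> \<bar>c - V n H\<bar> + dl n" by (rule cr_lip[OF c elim(4)])
    have e1: "eta \<le> w - (pu p1 + \<bar>c - pv p1\<bar>)" "eta \<le> (pu p2 - \<bar>c - pv p2\<bar>) - w"
      by (simp_all add: eta_def)
    have t1: "\<bar>c - V n G\<bar> \<le> \<bar>c - pv p1\<bar> + \<bar>V n G - pv p1\<bar>" by (smt (verit))
    have t2: "\<bar>c - V n H\<bar> \<le> \<bar>c - pv p2\<bar> + \<bar>V n H - pv p2\<bar>" by (smt (verit))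
    have d2: "dl n < eta / 2" using elim(3) by simp
    have "U n (cr n c G) \<le> w" using abs_le_D1[OF uG(1)] uG(2) abs_le_D1[OF cG] e1 d2 t1 by linarith
    moreover have "w \<le> U n (cr n c H)" using abs_le_D2[OF uH(1)] uH(2) abs_le_D2[OF cH] e1 d2 t2 by linarith
    ultimately obtain F where F: "simple_graph n F" "\<bar>U n F - w\<bar> \<le> 3 * dl n" "c \<le> V n F" "V n F \<le> c + dl n"
      using key_finite[OF elim(4) c G(1) H(1), of w] by auto
    have "dist (pt n F) ((w + c) / 2, (w - c) / 2) \<le> \<bar>X n F - (w + c) / 2\<bar> + \<bar>Y n F - (w - c) / 2\<bar>"
      unfolding pt_def by (rule dist_pair_le)
    also have "\<dots> \<le> 4 * dl n" using F(2-4) unfolding U_def V_def by (intro aux4)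
    also have "\<dots> < e" using elim(3) by simp
    finally show ?case using F(1) by blast
  qed
qed

end

definition Qg :: "nat \<Rightarrow> nat \<Rightarrow> nat \<Rightarrow> bool" where
  "Qg m = (\<lambda>a b. a \<noteq> b \<and> a < m \<and> b < m)"

lemma simple_Qg: "simple_graph n (Qg m)"
  by (auto simp: simple_graph_def Qg_def)

lemma two_elems:
  assumes "finite S" "2 \<le> card S" "x \<in> S"
  shows "\<exists>y\<in>S. y \<noteq> x"
proof (rule ccontr)
  assume "\<not> (\<exists>y\<in>S. y \<noteq> x)"
  then have "S = {x}" using assms(3) by blast
  then show False using assms(2) by simp
qed

lemma kc_Qg:
  assumes "m \<le> n" "2 \<le> t"
  shows "k_cliques t n (Qg m) = m choose t"
proof -
  have "clq t n (Qg m) = {S. S \<subseteq> {..<m} \<and> card S = t}"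
  proof (intro set_eqI iffI)
    fix S assume S: "S \<in> clq t n (Qg m)"
    have fin: "finite S" using S unfolding clq_def by (auto intro: finite_subset[of _ "{..<n}"])
    have "x < m" if xS: "x \<in> S" for x
    proof -
      have "2 \<le> card S" using S assms(2) by (simp add: clq_def)
      then obtain y where "y \<in> S" "y \<noteq> x" using two_elems[OF fin _ xS] by blast
      then show ?thesis using S xS by (auto simp: clq_def Qg_def)
    qed
    then have "S \<subseteq> {..<m}" by auto
    moreover have "card S = t" using S by (simp add: clq_def)
    ultimately show "S \<in> {S. S \<subseteq> {..<m} \<and> card S = t}" by simp
  next
    fix S assume S: "S \<in> {S. S \<subseteq> {..<m} \<and> card S = t}"
    then have "S \<subseteq> {..<n}" using assms(1) by auto
    moreover have "\<forall>x\<in>S. \<forall>y\<in>S. x \<noteq> y \<longrightarrow> Qg m x y" using S by (auto simp: Qg_def)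
    ultimately show "S \<in> clq t n (Qg m)" using S by (simp add: clq_def)
  qed
  then have "k_cliques t n (Qg m) = card {S. S \<subseteq> {..<m} \<and> card S = t}" by (simp add: k_cliques_clq)
  also have "\<dots> = m choose t" by (subst n_subsets) auto
  finally show ?thesis .
qed

lemma kc_compl_Qg:
  assumes "m \<le> n" "2 \<le> s"
  shows "k_cliques s n (graph_compl (Qg m)) = ((n - m) choose s) + m * ((n - m) choose (s - 1))"
proof -
  let ?R = "{m..<n}"
  let ?A = "{S. S \<subseteq> ?R \<and> card S = s}"
  let ?T = "{T. T \<subseteq> ?R \<and> card T = s - 1}"
  let ?B = "\<Union>a\<in>{..<m}. insert a ` ?T"
  have eq: "clq s n (graph_compl (Qg m)) = ?A \<union> ?B"
  proof (intro set_eqI iffI)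
    fix S assume S: "S \<in> clq s n (graph_compl (Qg m))"
    have fin: "finite S" using S unfolding clq_def by (auto intro: finite_subset[of _ "{..<n}"])
    have Sn: "S \<subseteq> {..<n}" and cS: "card S = s"
      and cl: "\<And>x y. x \<in> S \<Longrightarrow> y \<in> S \<Longrightarrow> x \<noteq> y \<Longrightarrow> \<not> (x < m \<and> y < m)"
      using S by (auto simp: clq_def graph_compl_def Qg_def)
    show "S \<in> ?A \<union> ?B"
    proof (cases "\<exists>a\<in>S. a < m")
      case False
      then have "S \<subseteq> ?R" using Sn by force
      then have "S \<in> ?A" using cS by simp
      then show ?thesis by (rule UnI1)
    next
      case True
      then obtain a where a: "a \<in> S" "a < m" by blast
      have "S - {a} \<subseteq> ?R"
      proof
        fix x assume "x \<in> S - {a}"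
        then have "x \<in> S" "x \<noteq> a" by auto
        then show "x \<in> ?R" using cl[of x a] a Sn by force
      qed
      moreover have "card (S - {a}) = s - 1" using cS a fin by simp
      ultimately have "S - {a} \<in> ?T" by blast
      moreover have "S = insert a (S - {a})" using a by auto
      ultimately have "S \<in> insert a ` ?T" by (metis image_eqI)
      then have "S \<in> ?B" using a(2) by (intro UN_I[of a]) auto
      then show ?thesis by (rule UnI2)
    qed
  next
    fix S assume "S \<in> ?A \<union> ?B"
    then show "S \<in> clq s n (graph_compl (Qg m))"
    proof
      assume "S \<in> ?A"
      then show ?thesis by (auto simp: clq_def graph_compl_def Qg_def)
    next
      assume "S \<in> ?B"
      then obtain a T where aT: "a < m" "T \<subseteq> ?R" "card T = s - 1" "S = insert a T" by blast
      have "a \<notin> T" using aT by auto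
      moreover have "finite T" using aT(2) finite_subset by blast
      ultimately have "card S = s" using aT assms(2) by simp
      moreover have "S \<subseteq> {..<n}" using aT assms(1) by auto
      moreover have "\<forall>x\<in>S. \<forall>y\<in>S. x \<noteq> y \<longrightarrow> graph_compl (Qg m) x y"
        using aT by (auto simp: graph_compl_def Qg_def)
      ultimately show ?thesis by (simp add: clq_def)
    qed
  qed
  have finT: "finite ?T" by (rule finite_subset[of _ "Pow ?R"]) auto
  have finA: "finite ?A" by (rule finite_subset[of _ "Pow ?R"]) auto
  have disj: "?A \<inter> ?B = {}"
  proof (rule ccontr)
    assume "?A \<inter> ?B \<noteq> {}"
    then obtain S where S1: "S \<in> ?A" and S2: "S \<in> ?B" by blast
    from S2 obtain a T where "a < m" "S = insert a T" by blast
    then show False using S1 by auto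
  qed
  have cA: "card ?A = (n - m) choose s" by (subst n_subsets) auto
  have cT: "card ?T = (n - m) choose (s - 1)" by (subst n_subsets) auto
  have cI: "card (insert a ` ?T) = card ?T" if "a < m" for a
  proof (rule card_image)
    show "inj_on (insert a) ?T"
    proof (rule inj_onI)
      fix X Y assume "X \<in> ?T" "Y \<in> ?T" "insert a X = insert a Y"
      moreover have "a \<notin> X" "a \<notin> Y" using \<open>X \<in> ?T\<close> \<open>Y \<in> ?T\<close> that by auto
      ultimately show "X = Y" by (metis insert_ident)
    qed
  qed
  have cB: "card ?B = m * ((n - m) choose (s - 1))"
  proof -
    have "card ?B = (\<Sum>a\<in>{..<m}. card (insert a ` ?T))"
    proof (rule card_UN_disjoint)
      show "finite {..<m}" by simp
      show "\<forall>i\<in>{..<m}. finite (insert i ` ?T)" using finT by simp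
      show "\<forall>i\<in>{..<m}. \<forall>j\<in>{..<m}. i \<noteq> j \<longrightarrow> insert i ` ?T \<inter> insert j ` ?T = {}"
      proof (intro ballI impI)
        fix i j assume ij: "i \<in> {..<m}" "j \<in> {..<m}" "i \<noteq> j"
        show "insert i ` ?T \<inter> insert j ` ?T = {}"
        proof (rule ccontr)
          assume "insert i ` ?T \<inter> insert j ` ?T \<noteq> {}"
          then obtain X Y where XY: "X \<in> ?T" "Y \<in> ?T" "insert i X = insert j Y" by blast
          then have "i \<in> insert j Y" by blast
          then have "i \<in> Y" using ij(3) by simp
          then show False using XY(2) ij(1) by auto
        qed
      qed
    qed
    also have "\<dots> = (\<Sum>a\<in>{..<m}. (n - m) choose (s - 1))" using cI cT by simp
    finally show ?thesis by simp
  qed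
  have finB: "finite ?B" using finT by simp
  show ?thesis unfolding k_cliques_clq eq
    using card_Un_disjoint[OF finA finB disj] cA cB by simp
qed


lemma choose_prod:
  "real (a choose k) = (\<Prod>i=0..<k. real a - real i) / fact k"
  using binomial_gbinomial[of a k, where 'a=real] by (simp add: gbinomial_prod_rev)

lemma binom_ratio_lim:
  fixes a b :: "nat \<Rightarrow> nat"
  assumes lim: "(\<lambda>n. real (a n) / real (b n)) \<longlonglongrightarrow> \<beta>"
    and inf: "filterlim (\<lambda>n. real (b n)) at_top sequentially"
  shows "(\<lambda>n. real (a n choose k) / real (b n choose k)) \<longlonglongrightarrow> \<beta> ^ k"
proof -
  have ib: "(\<lambda>n. inverse (real (b n))) \<longlonglongrightarrow> 0" by (rule tendsto_inverse_0_at_top[OF inf])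
  have fac: "(\<lambda>n. (real (a n) / real (b n) - real i * inverse (real (b n))) / (1 - real i * inverse (real (b n)))) \<longlonglongrightarrow> \<beta>" for i
  proof -
    have "(\<lambda>n. (real (a n) / real (b n) - real i * inverse (real (b n))) / (1 - real i * inverse (real (b n))))
        \<longlonglongrightarrow> (\<beta> - real i * 0) / (1 - real i * 0)"
      by (intro tendsto_intros lim ib) simp
    then show ?thesis by simp
  qed
  have P: "(\<lambda>n. \<Prod>i\<in>{0..<k}. (real (a n) / real (b n) - real i * inverse (real (b n))) / (1 - real i * inverse (real (b n))))
      \<longlonglongrightarrow> (\<Prod>i\<in>{0..<k}. \<beta>)"
    by (intro tendsto_prod fac)
  have ev: "eventually (\<lambda>n. real k < real (b n)) sequentially"
    using inf unfolding filterlim_at_top_dense by blast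
  show ?thesis
  proof (rule Lim_transform_eventually[OF P[unfolded prod_constant card_atLeastLessThan diff_zero]])
    show "eventually (\<lambda>n. (\<Prod>i\<in>{0..<k}. (real (a n) / real (b n) - real i * inverse (real (b n))) / (1 - real i * inverse (real (b n))))
       = real (a n choose k) / real (b n choose k)) sequentially"
      using ev
    proof (rule eventually_mono)
      fix n assume kb: "real k < real (b n)"
      have b0: "real (b n) \<noteq> 0" using kb by linarith
      have "(\<Prod>i\<in>{0..<k}. (real (a n) / real (b n) - real i * inverse (real (b n))) / (1 - real i * inverse (real (b n))))
          = (\<Prod>i\<in>{0..<k}. (real (a n) - real i) / (real (b n) - real i))"
      proof (rule prod.cong[OF refl])
        fix i assume "i \<in> {0..<k}"
        then have "real i < real (b n)" using kb by simp
        then have "real (b n) - real i \<noteq> 0" by simp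
        then show "(real (a n) / real (b n) - real i * inverse (real (b n))) / (1 - real i * inverse (real (b n)))
           = (real (a n) - real i) / (real (b n) - real i)"
          using b0 by (simp add: field_simps)
      qed
      also have "\<dots> = (\<Prod>i\<in>{0..<k}. (real (a n) - real i)) / (\<Prod>i\<in>{0..<k}. (real (b n) - real i))"
        by (rule prod_dividef)
      also have "\<dots> = real (a n choose k) / real (b n choose k)"
        by (simp add: choose_prod)
      finally show "(\<Prod>i\<in>{0..<k}. (real (a n) / real (b n) - real i * inverse (real (b n))) / (1 - real i * inverse (real (b n))))
       = real (a n choose k) / real (b n choose k)" .
    qed
  qed
qed

definition mm :: "real \<Rightarrow> nat \<Rightarrow> nat" where "mm \<alpha> n = nat \<lfloor>\<alpha> * real n\<rfloor>"

lemma mm_le: "0 \<le> \<alpha> \<Longrightarrow> \<alpha> \<le> 1 \<Longrightarrow> mm \<alpha> n \<le> n"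
proof -
  assume a: "0 \<le> \<alpha>" "\<alpha> \<le> 1"
  have "\<alpha> * real n \<le> real n" using a by (simp add: mult_left_le_one_le)
  then have "\<lfloor>\<alpha> * real n\<rfloor> \<le> int n" by linarith
  then show ?thesis by (simp add: mm_def nat_le_iff)
qed

lemma mm_bounds:
  assumes "0 \<le> \<alpha>"
  shows "\<alpha> * real n - 1 < real (mm \<alpha> n)" "real (mm \<alpha> n) \<le> \<alpha> * real n"
proof -
  have "0 \<le> \<lfloor>\<alpha> * real n\<rfloor>" using assms by simp
  then have e: "real (mm \<alpha> n) = real_of_int \<lfloor>\<alpha> * real n\<rfloor>" by (simp add: mm_def)
  show "\<alpha> * real n - 1 < real (mm \<alpha> n)" unfolding e by linarith
  show "real (mm \<alpha> n) \<le> \<alpha> * real n" unfolding e by linarith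
qed

lemma mm_lim:
  assumes "0 \<le> \<alpha>"
  shows "(\<lambda>n. real (mm \<alpha> n) / real n) \<longlonglongrightarrow> \<alpha>"
proof (rule tendsto_sandwich)
  show "eventually (\<lambda>n. \<alpha> - 1 / real n \<le> real (mm \<alpha> n) / real n) sequentially"
    using eventually_gt_at_top[of 0]
  proof (rule eventually_mono)
    fix n :: nat assume "0 < n"
    have "(\<alpha> * real n - 1) / real n \<le> real (mm \<alpha> n) / real n"
      using mm_bounds(1)[OF assms, of n] by (intro divide_right_mono) auto
    moreover have "\<alpha> - 1 / real n = (\<alpha> * real n - 1) / real n" using \<open>0 < n\<close> by (simp add: field_simps)
    ultimately show "\<alpha> - 1 / real n \<le> real (mm \<alpha> n) / real n" by simp
  qed
  show "eventually (\<lambda>n. real (mm \<alpha> n) / real n \<le> \<alpha>) sequentially"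
    using eventually_gt_at_top[of 0]
  proof (rule eventually_mono)
    fix n :: nat assume "0 < n"
    then show "real (mm \<alpha> n) / real n \<le> \<alpha>"
      using mm_bounds(2)[OF assms, of n] by (simp add: field_simps)
  qed
  have "(\<lambda>n. \<alpha> - 1 / real n) \<longlonglongrightarrow> \<alpha> - 0" by (intro tendsto_intros lim_const_over_n)
  then show "(\<lambda>n. \<alpha> - 1 / real n) \<longlonglongrightarrow> \<alpha>" by simp
  show "(\<lambda>n. \<alpha>) \<longlonglongrightarrow> \<alpha>" by simp
qed

lemma rest_lim:
  assumes "0 \<le> \<alpha>" "\<alpha> \<le> 1"
  shows "(\<lambda>n. real (n - mm \<alpha> n) / real n) \<longlonglongrightarrow> 1 - \<alpha>"
proof -
  have "(\<lambda>n. 1 - real (mm \<alpha> n) / real n) \<longlonglongrightarrow> 1 - \<alpha>" by (intro tendsto_intros mm_lim assms)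
  moreover have "eventually (\<lambda>n. 1 - real (mm \<alpha> n) / real n = real (n - mm \<alpha> n) / real n) sequentially"
    using eventually_gt_at_top[of 0]
  proof (rule eventually_mono)
    fix n :: nat assume "0 < n"
    then show "1 - real (mm \<alpha> n) / real n = real (n - mm \<alpha> n) / real n"
      using mm_le[OF assms, of n] by (simp add: field_simps of_nat_diff)
  qed
  ultimately show ?thesis by (rule Lim_transform_eventually)
qed

lemma rest_lim1:
  assumes "0 \<le> \<alpha>" "\<alpha> \<le> 1"
  shows "(\<lambda>n. real (n - mm \<alpha> n) / real (n - 1)) \<longlonglongrightarrow> 1 - \<alpha>"
proof -
  have r: "(\<lambda>n. real n / real (n - 1)) \<longlonglongrightarrow> 1"
  proof -
    have "(\<lambda>n. 1 / (1 - 1 / real n)) \<longlonglongrightarrow> 1 / (1 - 0)" by (intro tendsto_intros lim_const_over_n) simp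
    moreover have "eventually (\<lambda>n. 1 / (1 - 1 / real n) = real n / real (n - 1)) sequentially"
      using eventually_gt_at_top[of 1]
    proof (rule eventually_mono)
      fix n :: nat assume "1 < n"
      then show "1 / (1 - 1 / real n) = real n / real (n - 1)" by (simp add: field_simps of_nat_diff)
    qed
    ultimately show ?thesis by (simp add: Lim_transform_eventually)
  qed
  have "(\<lambda>n. (real (n - mm \<alpha> n) / real n) * (real n / real (n - 1))) \<longlonglongrightarrow> (1 - \<alpha>) * 1"
    by (intro tendsto_intros rest_lim assms r)
  moreover have "eventually (\<lambda>n. (real (n - mm \<alpha> n) / real n) * (real n / real (n - 1)) = real (n - mm \<alpha> n) / real (n - 1)) sequentially"
    using eventually_gt_at_top[of 0]
  proof (rule eventually_mono)
    fix n :: nat assume "0 < n"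
    then show "(real (n - mm \<alpha> n) / real n) * (real n / real (n - 1)) = real (n - mm \<alpha> n) / real (n - 1)" by simp
  qed
  ultimately show ?thesis by (simp add: Lim_transform_eventually)
qed

lemma filterlim_n1: "filterlim (\<lambda>n. real (n - 1)) at_top sequentially"
  by (rule filterlim_compose[OF filterlim_real_sequentially filterlim_minus_const_nat_at_top])


context ST
begin

lemma fam_in:
  assumes a: "0 \<le> \<alpha>" "\<alpha> \<le> 1"
  shows "((1 - \<alpha>) ^ s + real s * \<alpha> * (1 - \<alpha>) ^ (s - 1), \<alpha> ^ t) \<in> Omega s t"
proof -
  define G where "G n = Qg (mm \<alpha> n)" for n
  have Y: "(\<lambda>n. real (k_cliques t n (G n)) / real (n choose t)) \<longlonglongrightarrow> \<alpha> ^ t"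
  proof -
    have "(\<lambda>n. real (mm \<alpha> n choose t) / real (n choose t)) \<longlonglongrightarrow> \<alpha> ^ t"
      using binom_ratio_lim[of "mm \<alpha>" "\<lambda>n. n" \<alpha> t] mm_lim[OF a(1)] filterlim_real_sequentially by simp
    then show ?thesis unfolding G_def using kc_Qg[OF mm_le[OF a] t2] by simp
  qed
  have T1: "(\<lambda>n. real ((n - mm \<alpha> n) choose s) / real (n choose s)) \<longlonglongrightarrow> (1 - \<alpha>) ^ s"
    using binom_ratio_lim[of "\<lambda>n. n - mm \<alpha> n" "\<lambda>n. n" "1 - \<alpha>" s] rest_lim[OF a] filterlim_real_sequentially
    by simp
  have T2: "(\<lambda>n. real (mm \<alpha> n * ((n - mm \<alpha> n) choose (s - 1))) / real (n choose s))
      \<longlonglongrightarrow> real s * \<alpha> * (1 - \<alpha>) ^ (s - 1)"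
  proof -
    have R: "(\<lambda>n. real ((n - mm \<alpha> n) choose (s - 1)) / real ((n - 1) choose (s - 1))) \<longlonglongrightarrow> (1 - \<alpha>) ^ (s - 1)"
      by (rule binom_ratio_lim[OF rest_lim1[OF a] filterlim_n1])
    have "(\<lambda>n. (real (mm \<alpha> n) / real n) * real s * (real ((n - mm \<alpha> n) choose (s - 1)) / real ((n - 1) choose (s - 1))))
        \<longlonglongrightarrow> \<alpha> * real s * (1 - \<alpha>) ^ (s - 1)"
      by (intro tendsto_intros mm_lim a R)
    moreover have "eventually (\<lambda>n. (real (mm \<alpha> n) / real n) * real s * (real ((n - mm \<alpha> n) choose (s - 1)) / real ((n - 1) choose (s - 1)))
        = real (mm \<alpha> n * ((n - mm \<alpha> n) choose (s - 1))) / real (n choose s)) sequentially"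
      using eventually_ge_at_top[of s]
    proof (rule eventually_mono)
      fix n assume sn: "s \<le> n"
      have br: "real ((n - 1) choose (s - 1)) / real (n choose s) = real s / real n"
        using s2 sn by (intro binom_ratio) auto
      have p1: "real ((n - 1) choose (s - 1)) > 0" using s2 sn by simp
      have p2: "real (n choose s) > 0" using sn by simp
      have p3: "real n > 0" using s2 sn by simp
      have br': "real ((n - 1) choose (s - 1)) * real n = real s * real (n choose s)"
        using br p2 p3 by (simp add: field_simps)
      show "(real (mm \<alpha> n) / real n) * real s * (real ((n - mm \<alpha> n) choose (s - 1)) / real ((n - 1) choose (s - 1)))
        = real (mm \<alpha> n * ((n - mm \<alpha> n) choose (s - 1))) / real (n choose s)"
        using p1 p2 p3 br' s2 by (simp add: field_simps)
    qed
    ultimately show ?thesis by (simp add: Lim_transform_eventually mult.commute mult.left_commute)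
  qed
  have X: "(\<lambda>n. real (k_cliques s n (graph_compl (G n))) / real (n choose s))
      \<longlonglongrightarrow> (1 - \<alpha>) ^ s + real s * \<alpha> * (1 - \<alpha>) ^ (s - 1)"
  proof -
    have "(\<lambda>n. real ((n - mm \<alpha> n) choose s) / real (n choose s) + real (mm \<alpha> n * ((n - mm \<alpha> n) choose (s - 1))) / real (n choose s))
      \<longlonglongrightarrow> (1 - \<alpha>) ^ s + real s * \<alpha> * (1 - \<alpha>) ^ (s - 1)"
      by (rule tendsto_add[OF T1 T2])
    then show ?thesis unfolding G_def using kc_compl_Qg[OF mm_le[OF a] s2]
      by (simp add: add_divide_distrib)
  qed
  have "\<forall>n. simple_graph n (G n)" by (simp add: G_def simple_Qg)
  then show ?thesis unfolding Omega_def using X Y by blast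
qed

lemma fibre_ne_proof:
  assumes "-1 \<le> c" "c \<le> 1"
  shows "\<exists>p\<in>Omega s t. pv p = c"
proof -
  define g where "g \<alpha> = (1 - \<alpha>) ^ s + real s * \<alpha> * (1 - \<alpha>) ^ (s - 1) - \<alpha> ^ t" for \<alpha> :: real
  have "0 < s" "0 < s - 1" "0 < t" using s2 t2 by auto
  then have g1: "g 1 = -1" by (simp add: g_def zero_power)
  have g0: "g 0 = 1" using s2 t2 by (simp add: g_def)
  have "continuous_on {0..1} g" unfolding g_def by (intro continuous_intros)
  then obtain \<alpha> where "0 \<le> \<alpha>" "\<alpha> \<le> 1" "g \<alpha> = c"
    using IVT2'[of g 1 c 0] g0 g1 assms by auto
  then show ?thesis using fam_in[of \<alpha>] by (intro bexI) (auto simp: pv_def g_def)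
qed

end

lemma pt_uv: "p = ((pu p + pv p) / 2, (pu p - pv p) / 2)"
  by (cases p) (simp add: pu_def pv_def field_simps)

lemma pu_mk[simp]: "pu ((w + c) / 2, (w - c) / 2) = w" by (simp add: pu_def field_simps)
lemma pv_mk[simp]: "pv ((w + c) / 2, (w - c) / 2) = c" by (simp add: pv_def field_simps)

lemma cont_pv: "continuous_on S pv" unfolding pv_def by (intro continuous_intros)
lemma cont_pu: "continuous_on S pu" unfolding pu_def by (intro continuous_intros)

context ST
begin

lemma fibre_ne: "-1 \<le> c \<Longrightarrow> c \<le> 1 \<Longrightarrow> \<exists>p\<in>Omega s t. pv p = c"
  by (rule fibre_ne_proof)

lemma pv_Omega: "p \<in> Omega s t \<Longrightarrow> -1 \<le> pv p \<and> pv p \<le> 1"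
proof -
  assume "p \<in> Omega s t"
  then have "p \<in> cbox (0,0) (1,1)" using Omega_box by blast
  then show ?thesis by (cases p) (simp add: pv_def cbox_Pair_iff)
qed

definition Lp where "Lp c = (SOME p. p \<in> Omega s t \<and> pv p = c \<and> (\<forall>q\<in>Omega s t. pv q = c \<longrightarrow> pu p \<le> pu q))"
definition L where "L c = pu (Lp c)"

lemma Lp_props:
  assumes "-1 \<le> c" "c \<le> 1"
  shows "Lp c \<in> Omega s t" "pv (Lp c) = c" "\<And>q. q \<in> Omega s t \<Longrightarrow> pv q = c \<Longrightarrow> L c \<le> pu q"
proof -
  let ?F = "Omega s t \<inter> {p. pv p = c}"
  have "closed {p. pv p = c}"
    unfolding pv_def by (intro closed_Collect_eq continuous_intros)
  then have "compact ?F" using Omega_compact by (intro compact_Int_closed)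
  moreover have "?F \<noteq> {}" using fibre_ne[OF assms] by auto
  ultimately obtain p where "p \<in> ?F" "\<forall>q\<in>?F. pu p \<le> pu q"
    using continuous_attains_inf[of ?F pu] cont_pu by blast
  then have ex: "\<exists>p. p \<in> Omega s t \<and> pv p = c \<and> (\<forall>q\<in>Omega s t. pv q = c \<longrightarrow> pu p \<le> pu q)" by blast
  have "Lp c \<in> Omega s t \<and> pv (Lp c) = c \<and> (\<forall>q\<in>Omega s t. pv q = c \<longrightarrow> pu (Lp c) \<le> pu q)"
    unfolding Lp_def by (rule someI_ex[OF ex])
  then show "Lp c \<in> Omega s t" "pv (Lp c) = c" "\<And>q. q \<in> Omega s t \<Longrightarrow> pv q = c \<Longrightarrow> L c \<le> pu q"
    by (auto simp: L_def)
qed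

lemma fibre_convex:
  assumes "p1 \<in> Omega s t" "p2 \<in> Omega s t" "pv p1 = c" "pv p2 = c" "pu p1 \<le> w" "w \<le> pu p2"
  shows "((w + c) / 2, (w - c) / 2) \<in> Omega s t"
proof -
  have c: "-1 \<le> c" "c \<le> 1" using pv_Omega[OF assms(1)] assms(3) by auto
  show ?thesis
  proof (cases "pu p1 = w")
    case True
    then show ?thesis using assms(1,3) pt_uv[of p1] by simp
  next
    case f1: False
    show ?thesis
    proof (cases "pu p2 = w")
      case True
      then show ?thesis using assms(2,4) pt_uv[of p2] by simp
    next
      case False
      show ?thesis
        by (rule key_limit[OF assms(1,2) c]) (use assms f1 False in auto)
    qed
  qed
qed

lemma L_lip1:
  assumes "-1 \<le> c" "c \<le> 1" "-1 \<le> c'" "c' \<le> 1"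
  shows "L c' \<le> L c + \<bar>c - c'\<bar>"
proof (rule ccontr)
  assume A: "\<not> L c' \<le> L c + \<bar>c - c'\<bar>"
  define w where "w = (L c + \<bar>c - c'\<bar> + L c') / 2"
  have "((w + c') / 2, (w - c') / 2) \<in> Omega s t"
  proof (rule key_limit[OF Lp_props(1)[OF assms(1,2)] Lp_props(1)[OF assms(3,4)] assms(3,4)])
    show "pu (Lp c) + \<bar>c' - pv (Lp c)\<bar> < w"
      using A Lp_props(2)[OF assms(1,2)] by (simp add: w_def L_def abs_minus_commute)
    show "w < pu (Lp c') - \<bar>c' - pv (Lp c')\<bar>"
      using A Lp_props(2)[OF assms(3,4)] by (simp add: w_def L_def)
  qed
  then have "L c' \<le> w" using Lp_props(3)[OF assms(3,4), of "((w + c') / 2, (w - c') / 2)"] by simp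
  then show False using A by (simp add: w_def)
qed

lemma L_lip:
  assumes "-1 \<le> c" "c \<le> 1" "-1 \<le> c'" "c' \<le> 1"
  shows "\<bar>L c' - L c\<bar> \<le> \<bar>c' - c\<bar>"
  using L_lip1[OF assms] L_lip1[OF assms(3,4,1,2)] by (simp add: abs_minus_commute abs_le_iff)

lemma L_cont: "continuous_on {-1..1} L"
  unfolding continuous_on_iff
proof (intro ballI allI impI)
  fix x e :: real assume x: "x \<in> {-1..1}" and e: "e > 0"
  show "\<exists>d>0. \<forall>x'\<in>{-1..1}. dist x' x < d \<longrightarrow> dist (L x') (L x) < e"
    using L_lip x e by (intro exI[of _ e]) (force simp: dist_real_def)
qed

definition ell where "ell c = ((L c + c) / 2, (L c - c) / 2)"

lemma ell_eq: "-1 \<le> c \<Longrightarrow> c \<le> 1 \<Longrightarrow> ell c = Lp c"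
  using pt_uv[of "Lp c"] Lp_props(2)[of c] by (simp add: ell_def L_def)

lemma ell_in: "c \<in> {-1..1} \<Longrightarrow> ell c \<in> Omega s t"
  using ell_eq Lp_props(1) by auto

lemma ell_cont: "continuous_on {-1..1} ell"
  unfolding ell_def by (intro continuous_intros L_cont) auto

lemma Omega_contractible: "contractible (Omega s t)"
proof -
  let ?S = "Omega s t"
  have h1: "homotopic_with_canon (\<lambda>x. True) ?S ?S id (ell \<circ> pv)"
  proof (rule homotopic_with_linear)
    show "continuous_on ?S id" by (simp add: continuous_on_id)
    show "continuous_on ?S (ell \<circ> pv)"
      by (rule continuous_on_compose[OF cont_pv continuous_on_subset[OF ell_cont]])
         (use pv_Omega in auto)
    fix p assume p: "p \<in> ?S"
    let ?c = "pv p"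
    have c: "-1 \<le> ?c" "?c \<le> 1" using pv_Omega[OF p] by auto
    show "closed_segment (id p) ((ell \<circ> pv) p) \<subseteq> ?S"
    proof
      fix z assume "z \<in> closed_segment (id p) ((ell \<circ> pv) p)"
      then obtain u where u: "0 \<le> u" "u \<le> 1" "z = (1 - u) *\<^sub>R p + u *\<^sub>R Lp ?c"
        using ell_eq[OF c] unfolding closed_segment_def by auto
      have "pv z = (1 - u) * pv p + u * pv (Lp ?c)" using u(3)
        by (cases p, cases "Lp ?c") (simp add: pv_def algebra_simps)
      then have vz: "pv z = ?c" using Lp_props(2)[OF c] by (simp add: algebra_simps)
      have uz: "pu z = (1 - u) * pu p + u * pu (Lp ?c)" using u(3)
        by (cases p, cases "Lp ?c") (simp add: pu_def algebra_simps)
      have le: "pu (Lp ?c) \<le> pu p" using Lp_props(3)[OF c p] by (simp add: L_def)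
      have uz2: "pu z = pu p - u * (pu p - pu (Lp ?c))" using uz by (simp add: algebra_simps)
      have m1: "0 \<le> u * (pu p - pu (Lp ?c))" using le u(1) by simp
      have m2: "u * (pu p - pu (Lp ?c)) \<le> pu p - pu (Lp ?c)"
        using le u(1,2) by (intro mult_left_le_one_le) auto
      have "pu (Lp ?c) \<le> pu z" "pu z \<le> pu p" using uz2 m1 m2 by linarith+
      then have "((pu z + ?c) / 2, (pu z - ?c) / 2) \<in> ?S"
        by (intro fibre_convex[OF Lp_props(1)[OF c] p Lp_props(2)[OF c] refl])
      then show "z \<in> ?S" using pt_uv[of z] vz by simp
    qed
  qed
  have h2a: "homotopic_with_canon (\<lambda>f. True) ?S {-1..1} pv (\<lambda>_. 0)"
  proof (rule homotopic_with_linear)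
    show "continuous_on ?S pv" by (rule cont_pv)
    show "continuous_on ?S (\<lambda>_. 0::real)" by (rule continuous_on_const)
    fix p assume "p \<in> ?S"
    then have "pv p \<in> {-1..1}" using pv_Omega by auto
    then show "closed_segment (pv p) 0 \<subseteq> {-1..1}"
      by (simp add: closed_segment_subset)
  qed
  have h2: "homotopic_with_canon (\<lambda>x. True) ?S ?S (ell \<circ> pv) (ell \<circ> (\<lambda>_. 0))"
    by (rule homotopic_with_compose_continuous_left[OF _ ell_cont]) (use h2a ell_in in auto)
  have "homotopic_with_canon (\<lambda>x. True) ?S ?S id (\<lambda>x. ell 0)"
    using homotopic_with_trans[OF h1 h2] by (simp add: o_def)
  then show ?thesis unfolding contractible_def by blast
qed

end

theorem proposition2p1:
  fixes s t :: nat
  assumes "s \<ge> 2" and "t \<ge> 2"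
  shows "compact (Omega s t) \<and> simply_connected (Omega s t)"
proof -
  interpret ST s t using assms by unfold_locales
  show ?thesis using Omega_compact Omega_contractible contractible_imp_simply_connected by blast
qed

end
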